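(* For a measurable space $X$, the following are equivalent: (i) $X$ is sober, i.e. the diagram $X\xrightarrow{\delta}PX\rightrightarrows PPX$ with the two parallel maps $\delta_{PX}$ and $P\delta_X$ is an equalizer diagram in the category of measurable spaces; (ii) the map $x\mapsto\delta_x$ is a bijection between points of $X$ and $\{0,1\}$-valued probability measures on $X$; (iii) the map $X\to\mathrm{Stone}_\sigma(\Sigma(X))$, $x\mapsto(E\mapsto \top\text{ if }x\in E,\ \bot\text{ otherwise})$, is an isomorphism of measurable spaces.
   Context: For a measurable space $X$ with $\sigma$-algebra $\Sigma(X)$, $PX$ is the set of probability measures on $X$ with the smallest $\sigma$-algebra making $p\mapsto p(B)$ measurable for all $B\in\Sigma(X)$; for measurable $f$, $Pf$ is pushforward of measures; $\delta\colon X\to PX$ sends $x$ to the Dirac measure $\delta_x$. For a Boolean $\sigma$-algebra $A$ (a Boolean algebra with countable suprema and infima), $\mathrm{Stone}_\sigma(A)$ is the set of Boolean homomorphisms $A\to\{\bot,\top\}$ preserving countable suprema, equipped with the $\sigma$-algebra consisting of the sets $[a]=\{\phi:\phi(a)=\top\}$, $a\in A$. *)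

theory Defs
  imports "HOL-Probability.Probability"
begin

text \<open>P X is the space of probability measures on X (Giry monad, prob_algebra);
  delta is return; P f is pushforward (distr).\<close>

abbreviation PP :: "'a measure \<Rightarrow> 'a measure measure" where
  "PP X \<equiv> prob_algebra X"

text \<open>Sobriety: X --delta--> PX ==> PPX (delta_PX and P delta_X) is an equalizer
  in the category of measurable spaces.  Test objects Z range over measurable
  spaces of an arbitrary (but fixed) type 'z.\<close>

definition sober :: "'z itself \<Rightarrow> 'a measure \<Rightarrow> bool" where
  "sober _ X \<longleftrightarrow>
     return X \<in> X \<rightarrow>\<^sub>M PP X \<and>
     (\<forall>x\<in>space X. return (PP X) (return X x) = distr (return X x) (PP X) (return X)) \<and>
     (\<forall>(Z::'z measure) g. g \<in> Z \<rightarrow>\<^sub>M PP X \<and>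
        (\<forall>z\<in>space Z. return (PP X) (g z) = distr (g z) (PP X) (return X)) \<longrightarrow>
        (\<exists>h. h \<in> Z \<rightarrow>\<^sub>M X \<and> (\<forall>z\<in>space Z. return X (h z) = g z) \<and>
             (\<forall>h'. h' \<in> Z \<rightarrow>\<^sub>M X \<and> (\<forall>z\<in>space Z. return X (h' z) = g z) \<longrightarrow>
                   (\<forall>z\<in>space Z. h' z = h z))))"

definition zero_one_measures :: "'a measure \<Rightarrow> 'a measure set" where
  "zero_one_measures X =
     {p \<in> space (PP X). \<forall>A\<in>sets X. emeasure p A = 0 \<or> emeasure p A = 1}"

text \<open>Boolean sigma-homomorphisms Sigma(X) -> {False, True}; represented as
  predicates on sets, equal to False outside sets X (extensionality).\<close>

definition sigma_hom :: "'a measure \<Rightarrow> ('a set \<Rightarrow> bool) \<Rightarrow> bool" where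
  "sigma_hom X \<phi> \<longleftrightarrow>
     (\<forall>E. E \<notin> sets X \<longrightarrow> \<not> \<phi> E) \<and>
     \<phi> (space X) \<and> \<not> \<phi> {} \<and>
     (\<forall>E\<in>sets X. \<phi> (space X - E) \<longleftrightarrow> \<not> \<phi> E) \<and>
     (\<forall>E\<in>sets X. \<forall>F\<in>sets X. \<phi> (E \<inter> F) \<longleftrightarrow> \<phi> E \<and> \<phi> F) \<and>
     (\<forall>E\<in>sets X. \<forall>F\<in>sets X. \<phi> (E \<union> F) \<longleftrightarrow> \<phi> E \<or> \<phi> F) \<and>
     (\<forall>F::nat \<Rightarrow> 'a set. range F \<subseteq> sets X \<longrightarrow> (\<phi> (\<Union>(range F)) \<longleftrightarrow> (\<exists>n. \<phi> (F n))))"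

definition Stone_sigma :: "'a measure \<Rightarrow> ('a set \<Rightarrow> bool) measure" where
  "Stone_sigma X = measure_of {\<phi>. sigma_hom X \<phi>}
      ((\<lambda>a. {\<phi>. sigma_hom X \<phi> \<and> \<phi> a}) ` sets X) (\<lambda>_. 0)"

definition stone_unit :: "'a measure \<Rightarrow> 'a \<Rightarrow> ('a set \<Rightarrow> bool)" where
  "stone_unit X x = (\<lambda>E. E \<in> sets X \<and> x \<in> E)"

definition measurable_iso :: "'a measure \<Rightarrow> 'b measure \<Rightarrow> ('a \<Rightarrow> 'b) \<Rightarrow> bool" where
  "measurable_iso M N f \<longleftrightarrow>
     f \<in> M \<rightarrow>\<^sub>M N \<and>
     (\<exists>g. g \<in> N \<rightarrow>\<^sub>M M \<and> (\<forall>x\<in>space M. g (f x) = x) \<and> (\<forall>y\<in>space N. f (g y) = y))"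

end

theory Submission
  imports Defs
begin

lemma PP_facts:
  assumes "p \<in> space (PP X)"
  shows "sets p = sets X" "prob_space p" "space p = space X"
  using assms by (auto simp: space_prob_algebra dest: sets_eq_imp_space_eq)

lemma key:
  assumes p: "p \<in> zero_one_measures X" and S: "S \<in> sets (PP X)"
  shows "{x\<in>space X. return X x \<in> S} \<in> sets X \<and>
         emeasure p {x\<in>space X. return X x \<in> S} = indicator S p"
proof -
  let ?\<Omega> = "space (PP X)"
  define D where "D = {S. S \<subseteq> ?\<Omega> \<and> {x\<in>space X. return X x \<in> S} \<in> sets X \<and>
         emeasure p {x\<in>space X. return X x \<in> S} = indicator S p}"
  have pO: "p \<in> ?\<Omega>" and p01: "\<And>A. A \<in> sets X \<Longrightarrow> emeasure p A = 0 \<or> emeasure p A = 1"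
    using p by (auto simp: zero_one_measures_def)
  note pf = PP_facts[OF pO]
  interpret prob_space p by (rule pf(2))
  have sX1: "emeasure p (space X) = 1" using emeasure_space_1 pf by simp
  have retO: "\<And>x. x \<in> space X \<Longrightarrow> return X x \<in> ?\<Omega>"
    by (rule measurable_space[OF measurable_return_prob_space])
  have sa: "sigma_algebra ?\<Omega> D"
    unfolding sigma_algebra_iff2
  proof (intro conjI allI ballI impI)
    show "D \<subseteq> Pow ?\<Omega>" by (auto simp: D_def)
    show "{} \<in> D" by (auto simp: D_def)
  next
    fix s assume s: "s \<in> D"
    have eq: "{x\<in>space X. return X x \<in> ?\<Omega> - s} = space X - {x\<in>space X. return X x \<in> s}"
      using retO by auto
    have m: "{x\<in>space X. return X x \<in> s} \<in> sets X" using s by (auto simp: D_def)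
    have "emeasure p (space p - {x\<in>space X. return X x \<in> s}) = emeasure p (space p) - emeasure p {x\<in>space X. return X x \<in> s}"
      by (rule emeasure_compl) (use m pf in auto)
    then have e1: "emeasure p {x\<in>space X. return X x \<in> ?\<Omega> - s} = 1 - emeasure p {x\<in>space X. return X x \<in> s}"
      unfolding eq by (simp add: pf sX1)
    have "{x\<in>space X. return X x \<in> ?\<Omega> - s} \<in> sets X" unfolding eq using m by auto
    then show "?\<Omega> - s \<in> D" using s pO m e1 unfolding D_def
      by (simp add: indicator_def)
  next
    fix A :: "nat \<Rightarrow> _" assume A: "range A \<subseteq> D"
    have eq: "{x\<in>space X. return X x \<in> (\<Union>i. A i)} = (\<Union>i. {x\<in>space X. return X x \<in> A i})" by auto
    have m: "\<And>i. {x\<in>space X. return X x \<in> A i} \<in> sets X" using A by (auto simp: D_def)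
    have mu: "(\<Union>i. {x\<in>space X. return X x \<in> A i}) \<in> sets X" using m by auto
    have "emeasure p (\<Union>i. {x\<in>space X. return X x \<in> A i}) = indicator (\<Union>i. A i) p"
    proof (cases "\<exists>i. p \<in> A i")
      case True
      then obtain i where i: "p \<in> A i" by auto
      have "emeasure p {x\<in>space X. return X x \<in> A i} = 1"
      proof -
        have "A i \<in> D" using A by auto
        then show ?thesis using i by (simp add: D_def)
      qed
      moreover have "emeasure p {x\<in>space X. return X x \<in> A i} \<le> emeasure p (\<Union>i. {x\<in>space X. return X x \<in> A i})"
        by (rule emeasure_mono) (use mu pf in auto)
      moreover have "emeasure p (\<Union>i. {x\<in>space X. return X x \<in> A i}) \<le> 1"
        by (rule emeasure_le_1)
      ultimately show ?thesis using i by (auto simp: indicator_def)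
    next
      case False
      have "emeasure p (\<Union>i. {x\<in>space X. return X x \<in> A i}) = 0"
      proof (rule emeasure_UN_eq_0)
        fix i
        have "A i \<in> D" using A by auto
        then show "emeasure p {x\<in>space X. return X x \<in> A i} = 0" using False by (simp add: D_def)
      qed (use m pf in auto)
      then show ?thesis using False by (auto simp: indicator_def)
    qed
    moreover have "(\<Union>i. A i) \<subseteq> ?\<Omega>" using A by (auto simp: D_def)
    ultimately show "(\<Union>i. A i) \<in> D" using mu unfolding D_def mem_Collect_eq eq by blast
  qed
  define DM where "DM = measure_of ?\<Omega> D (\<lambda>_. 0)"
  have sDM: "sets DM = D" and spDM: "space DM = ?\<Omega>"
    unfolding DM_def using sa by (auto simp: sigma_algebra.sets_measure_of_eq sigma_algebra.space_measure_of_eq)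
  have "(\<lambda>q. q) \<in> DM \<rightarrow>\<^sub>M PP X"
  proof (rule measurable_prob_algebraI)
    show "\<And>x. x \<in> space DM \<Longrightarrow> prob_space x" by (auto simp: spDM space_prob_algebra)
    show "(\<lambda>q. q) \<in> DM \<rightarrow>\<^sub>M subprob_algebra X"
    proof (rule measurable_subprob_algebra)
      show "\<And>a. a \<in> space DM \<Longrightarrow> subprob_space a"
        by (auto simp: spDM space_prob_algebra prob_space_imp_subprob_space)
      show "\<And>a. a \<in> space DM \<Longrightarrow> sets a = sets X" by (auto simp: spDM space_prob_algebra)
    next
      fix A assume A: "A \<in> sets X"
      show "(\<lambda>a. emeasure a A) \<in> borel_measurable DM"
      proof (rule measurableI)
        fix B :: "ennreal set" assume B: "B \<in> sets borel"
        have eq: "{x\<in>space X. return X x \<in> (\<lambda>a. emeasure a A) -` B \<inter> ?\<Omega>} =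
          (if 1 \<in> B then if 0 \<in> B then space X else A else if 0 \<in> B then space X - A else {})"
          using retO A sets.sets_into_space[OF A] by (auto simp: indicator_def)
        have sX: "emeasure p (space X) = 1" using emeasure_space_1 pf by simp
        have cX: "emeasure p (space X - A) = 1 - emeasure p A"
          using emeasure_compl[of A p] A pf emeasure_space_1 by simp
        show "(\<lambda>a. emeasure a A) -` B \<inter> space DM \<in> sets DM"
          unfolding sDM spDM D_def mem_Collect_eq eq
        proof (intro conjI)
          show "(if 1 \<in> B then if 0 \<in> B then space X else A else if 0 \<in> B then space X - A else {}) \<in> sets X"
            using A by auto
          show "emeasure p (if 1 \<in> B then if 0 \<in> B then space X else A else if 0 \<in> B then space X - A else {}) =
            indicator ((\<lambda>a. emeasure a A) -` B \<inter> space (PP X)) p"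
            using p01[OF A] pO sX cX by (cases "1 \<in> B"; cases "0 \<in> B") (auto simp: indicator_def)
        qed auto
      qed simp
    qed
  qed
  from measurable_sets[OF this S] have "S \<in> D"
    using sets.sets_into_space[OF S] by (simp add: sDM spDM Int_absorb2)
  then show ?thesis by (auto simp: D_def)
qed

lemma emeasure_PP_meas: "A \<in> sets X \<Longrightarrow> (\<lambda>q. emeasure q A) \<in> borel_measurable (PP X)"
  unfolding prob_algebra_def by (intro measurable_restrict_space1 measurable_emeasure_subprob_algebra)

lemma ret_PP: "x \<in> space X \<Longrightarrow> return X x \<in> space (PP X)"
  by (rule measurable_space[OF measurable_return_prob_space])

lemma ret_zo: "x \<in> space X \<Longrightarrow> return X x \<in> zero_one_measures X"
  unfolding zero_one_measures_def using ret_PP by (auto simp: indicator_def)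

lemma eq_iff_zo:
  assumes p: "p \<in> space (PP X)"
  shows "return (PP X) p = distr p (PP X) (return X) \<longleftrightarrow> p \<in> zero_one_measures X"
proof
  note pf = PP_facts[OF p]
  assume eq: "return (PP X) p = distr p (PP X) (return X)"
  show "p \<in> zero_one_measures X"
    unfolding zero_one_measures_def
  proof (intro CollectI conjI ballI p)
    fix A assume A: "A \<in> sets X"
    define S where "S = (\<lambda>q. emeasure q A) -` {1} \<inter> space (PP X)"
    have S: "S \<in> sets (PP X)" unfolding S_def
      by (rule measurable_sets[OF emeasure_PP_meas[OF A]]) simp
    have pre: "return X -` S \<inter> space p = A"
      using A sets.sets_into_space[OF A] by (auto simp: S_def pf indicator_def intro!: ret_PP)
    have "emeasure (return (PP X) p) S = emeasure (distr p (PP X) (return X)) S" by (simp add: eq)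
    also have "\<dots> = emeasure p A"
      by (subst emeasure_distr) (use S pre in \<open>auto simp: measurable_cong_sets[OF pf(1) refl]\<close>)
    finally have "emeasure p A = indicator S p" using S by simp
    then show "emeasure p A = 0 \<or> emeasure p A = 1" by (auto simp: indicator_def)
  qed
next
  note pf = PP_facts[OF p]
  assume zo: "p \<in> zero_one_measures X"
  have rm: "return X \<in> p \<rightarrow>\<^sub>M PP X"
    using measurable_return_prob_space measurable_cong_sets[OF pf(1) refl] by blast
  show "return (PP X) p = distr p (PP X) (return X)"
  proof (rule measure_eqI)
    fix S assume "S \<in> sets (return (PP X) p)"
    then have S: "S \<in> sets (PP X)" by simp
    have pre: "return X -` S \<inter> space p = {x\<in>space X. return X x \<in> S}" by (auto simp: pf)
    show "emeasure (return (PP X) p) S = emeasure (distr p (PP X) (return X)) S"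
      using S key[OF zo S] rm by (simp add: emeasure_distr pre)
  qed simp
qed

lemma partA: "sober TYPE('z) X \<longleftrightarrow> bij_betw (return X) (space X) (zero_one_measures X)"
proof
  assume so: "sober TYPE('z) X"
  have U: "(\<exists>h. h \<in> Z \<rightarrow>\<^sub>M X \<and> (\<forall>z\<in>space Z. return X (h z) = g z) \<and>
             (\<forall>h'. h' \<in> Z \<rightarrow>\<^sub>M X \<and> (\<forall>z\<in>space Z. return X (h' z) = g z) \<longrightarrow>
                   (\<forall>z\<in>space Z. h' z = h z)))"
    if m: "g \<in> Z \<rightarrow>\<^sub>M PP X" and e: "\<forall>z\<in>space Z. return (PP X) (g z) = distr (g z) (PP X) (return X)"
    for Z :: "'z measure" and g
  proof -
    have "\<forall>(Z::'z measure) g. g \<in> Z \<rightarrow>\<^sub>M PP X \<and>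
        (\<forall>z\<in>space Z. return (PP X) (g z) = distr (g z) (PP X) (return X)) \<longrightarrow>
        (\<exists>h. h \<in> Z \<rightarrow>\<^sub>M X \<and> (\<forall>z\<in>space Z. return X (h z) = g z) \<and>
             (\<forall>h'. h' \<in> Z \<rightarrow>\<^sub>M X \<and> (\<forall>z\<in>space Z. return X (h' z) = g z) \<longrightarrow>
                   (\<forall>z\<in>space Z. h' z = h z)))"
      using so unfolding sober_def by (elim conjE)
    then have "g \<in> Z \<rightarrow>\<^sub>M PP X \<and> (\<forall>z\<in>space Z. return (PP X) (g z) = distr (g z) (PP X) (return X)) \<longrightarrow> ?thesis"
      by (drule_tac x=Z in spec, drule_tac x=g in spec) assumption
    then show ?thesis using conjI[OF m e] by (rule mp)
  qed
  let ?Z = "count_space (UNIV::'z set)"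
  obtain z0 :: 'z where True by auto
  have inj: "inj_on (return X) (space X)"
  proof (rule inj_onI)
    fix x y assume x: "x \<in> space X" and y: "y \<in> space X" and e: "return X x = return X y"
    have m1: "(\<lambda>_. return X x) \<in> ?Z \<rightarrow>\<^sub>M PP X" using ret_PP[OF x] by simp
    have e1: "\<forall>z\<in>space ?Z. return (PP X) (return X x) = distr (return X x) (PP X) (return X)"
      using eq_iff_zo[OF ret_PP[OF x]] ret_zo[OF x] by simp
    obtain h where h: "\<forall>h'. h' \<in> ?Z \<rightarrow>\<^sub>M X \<and> (\<forall>z\<in>space ?Z. return X (h' z) = return X x) \<longrightarrow>
                   (\<forall>z\<in>space ?Z. h' z = h z)"
      using U[OF m1 e1] by blast
    have hx: "(\<lambda>_. x) \<in> ?Z \<rightarrow>\<^sub>M X \<and> (\<forall>z\<in>space ?Z. return X ((\<lambda>_. x) z) = return X x) \<longrightarrow>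
        (\<forall>z\<in>space ?Z. (\<lambda>_. x) z = h z)" by (rule h[THEN spec[where x="\<lambda>_. x"]])
    have hy: "(\<lambda>_. y) \<in> ?Z \<rightarrow>\<^sub>M X \<and> (\<forall>z\<in>space ?Z. return X ((\<lambda>_. y) z) = return X x) \<longrightarrow>
        (\<forall>z\<in>space ?Z. (\<lambda>_. y) z = h z)" by (rule h[THEN spec[where x="\<lambda>_. y"]])
    have "x = h z0" using mp[OF hx conjI[OF measurable_const[OF x, of ?Z]]] by simp
    moreover have "y = h z0" using mp[OF hy conjI[OF measurable_const[OF y, of ?Z]]] e by simp
    ultimately show "x = y" by simp
  qed
  have surj: "zero_one_measures X \<subseteq> return X ` space X"
  proof
    fix p assume p: "p \<in> zero_one_measures X"
    then have pO: "p \<in> space (PP X)" by (simp add: zero_one_measures_def)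
    have m1: "(\<lambda>_. p) \<in> ?Z \<rightarrow>\<^sub>M PP X" using pO by simp
    have e1: "\<forall>z\<in>space ?Z. return (PP X) p = distr p (PP X) (return X)"
      using eq_iff_zo[OF pO] p by simp
    obtain h where h: "h \<in> ?Z \<rightarrow>\<^sub>M X" "\<forall>z\<in>space ?Z. return X (h z) = p"
      using U[OF m1 e1] by blast
    have "h z0 \<in> space X" using measurable_space[OF h(1), of z0] by simp
    moreover have "return X (h z0) = p" using h(2) by simp
    ultimately show "p \<in> return X ` space X" by blast
  qed
  show "bij_betw (return X) (space X) (zero_one_measures X)"
  proof -
    have "return X ` space X \<subseteq> zero_one_measures X" by (rule image_subsetI, rule ret_zo)
    then show ?thesis unfolding bij_betw_def using inj surj by simp
  qed
next
  assume bij: "bij_betw (return X) (space X) (zero_one_measures X)"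
  then have inj: "inj_on (return X) (space X)" by (simp add: bij_betw_def)
  show "sober TYPE('z) X"
    unfolding sober_def
  proof (intro conjI ballI allI impI)
    show "return X \<in> X \<rightarrow>\<^sub>M PP X" by (rule measurable_return_prob_space)
    fix x assume x: "x \<in> space X"
    show "return (PP X) (return X x) = distr (return X x) (PP X) (return X)"
      using eq_iff_zo[OF ret_PP[OF x]] ret_zo[OF x] by simp
  next
    fix Z :: "'z measure" and g
    assume a: "g \<in> Z \<rightarrow>\<^sub>M PP X \<and> (\<forall>z\<in>space Z. return (PP X) (g z) = distr (g z) (PP X) (return X))"
    then have gm: "g \<in> Z \<rightarrow>\<^sub>M PP X" by simp
    have gz: "g z \<in> zero_one_measures X" if z: "z \<in> space Z" for z
    proof -
      have gO: "g z \<in> space (PP X)" by (rule measurable_space[OF gm z])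
      have "return (PP X) (g z) = distr (g z) (PP X) (return X)" using a z by blast
      then show ?thesis using eq_iff_zo[OF gO] by simp
    qed
    define h where "h z = the_inv_into (space X) (return X) (g z)" for z
    have hX: "\<And>z. z \<in> space Z \<Longrightarrow> h z \<in> space X"
      unfolding h_def using the_inv_into_into[of "return X" "space X" "g z" "space X" for z] gz bij
      by (simp add: bij_betw_def)
    have hr: "\<And>z. z \<in> space Z \<Longrightarrow> return X (h z) = g z"
      unfolding h_def using gz bij by (simp add: f_the_inv_into_f_bij_betw)
    have hm: "h \<in> Z \<rightarrow>\<^sub>M X"
    proof (rule measurableI)
      fix A assume A: "A \<in> sets X"
      have "h -` A \<inter> space Z = (\<lambda>z. emeasure (g z) A) -` {1} \<inter> space Z"
      proof -
        have "\<And>z. z \<in> space Z \<Longrightarrow> emeasure (g z) A = indicator A (h z)"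
          using hr A by (metis emeasure_return)
        then show ?thesis by (auto simp: indicator_def)
      qed
      also have "\<dots> \<in> sets Z"
        by (rule measurable_sets[OF measurable_compose[OF gm emeasure_PP_meas[OF A]]]) simp
      finally show "h -` A \<inter> space Z \<in> sets Z" .
    qed (use hX in auto)
    show "\<exists>h. h \<in> Z \<rightarrow>\<^sub>M X \<and> (\<forall>z\<in>space Z. return X (h z) = g z) \<and>
             (\<forall>h'. h' \<in> Z \<rightarrow>\<^sub>M X \<and> (\<forall>z\<in>space Z. return X (h' z) = g z) \<longrightarrow>
                   (\<forall>z\<in>space Z. h' z = h z))"
    proof (intro exI conjI allI impI ballI)
      show "h \<in> Z \<rightarrow>\<^sub>M X" by (rule hm)
      show "\<And>z. z \<in> space Z \<Longrightarrow> return X (h z) = g z" by (rule hr)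
      fix h' z assume h': "h' \<in> Z \<rightarrow>\<^sub>M X \<and> (\<forall>z\<in>space Z. return X (h' z) = g z)" and z: "z \<in> space Z"
      have h'X: "h' z \<in> space X" using h' measurable_space[OF _ z, of h' X] by simp
      have "return X (h' z) = return X (h z)" using h' z hr[OF z] by simp
      then show "h' z = h z" using inj_onD[OF inj _ h'X hX[OF z]] by simp
    qed
  qed
qed

definition zo_hom :: "'a measure \<Rightarrow> 'a measure \<Rightarrow> ('a set \<Rightarrow> bool)" where
  "zo_hom X p = (\<lambda>A. A \<in> sets X \<and> emeasure p A = 1)"

definition hom_meas :: "'a measure \<Rightarrow> ('a set \<Rightarrow> bool) \<Rightarrow> 'a measure" where
  "hom_meas X \<phi> = measure_of (space X) (sets X) (\<lambda>A. if \<phi> A then 1 else 0)"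

lemma stone_space: "space (Stone_sigma X) = {\<phi>. sigma_hom X \<phi>}"
  and stone_sets: "sets (Stone_sigma X) = sigma_sets {\<phi>. sigma_hom X \<phi>} ((\<lambda>a. {\<phi>. sigma_hom X \<phi> \<and> \<phi> a}) ` sets X)"
  unfolding Stone_sigma_def by (auto intro!: space_measure_of sets_measure_of)

lemma stone_unit_hom: "x \<in> space X \<Longrightarrow> sigma_hom X (stone_unit X x)"
  unfolding sigma_hom_def stone_unit_def by auto

lemma zo_facts:
  assumes p: "p \<in> zero_one_measures X"
  shows "prob_space p" "sets p = sets X" "space p = space X"
    "\<And>A. A \<in> sets X \<Longrightarrow> emeasure p A = 0 \<or> emeasure p A = 1"
  using p PP_facts[of p X] by (auto simp: zero_one_measures_def)

lemma zo_hom_hom: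
  assumes p: "p \<in> zero_one_measures X"
  shows "sigma_hom X (zo_hom X p)"
proof -
  note f = zo_facts[OF p]
  interpret prob_space p by (rule f(1))
  have sp: "emeasure p (space X) = 1" using emeasure_space_1 f(3) by simp
  have cmp: "emeasure p (space X - E) = 1 - emeasure p E" if E: "E \<in> sets X" for E
  proof -
    have "E \<in> sets p" using E f(2) by simp
    then have "emeasure p (space p - E) = emeasure p (space p) - emeasure p E"
      using emeasure_compl[of E p] emeasure_finite[of E] by simp
    then show ?thesis using f(3) sp by simp
  qed
  have le1: "\<And>E. emeasure p E \<le> 1" by (rule emeasure_le_1)
  have mono: "emeasure p E \<le> emeasure p F" if "E \<in> sets X" "F \<in> sets X" "E \<subseteq> F" for E F
    using that f(2) by (intro emeasure_mono) auto
  show ?thesis unfolding sigma_hom_def zo_hom_def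
  proof (intro conjI allI impI ballI)
    show "\<And>E. E \<notin> sets X \<Longrightarrow> \<not> (E \<in> sets X \<and> emeasure p E = 1)" by simp
    show "space X \<in> sets X" by simp
    show "emeasure p (space X) = 1" using sp by simp
    show "\<not> ({} \<in> sets X \<and> emeasure p {} = 1)" by simp
  next
    fix E assume E: "E \<in> sets X"
    have c: "space X - E \<in> sets X" using E by simp
    show "(space X - E \<in> sets X \<and> emeasure p (space X - E) = 1) = (\<not> (E \<in> sets X \<and> emeasure p E = 1))"
    proof (cases "emeasure p E = 1")
      case True
      then show ?thesis using cmp[OF E] E by simp
    next
      case False
      then have "emeasure p E = 0" using f(4)[OF E] by blast
      then show ?thesis using cmp[OF E] c False by simp
    qed
  next
    fix E F assume E: "E \<in> sets X" and F: "F \<in> sets X"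
    have EF: "E \<inter> F \<in> sets X" "E \<union> F \<in> sets X" using E F by auto
    have u: "emeasure p E + emeasure p F = emeasure p (E \<union> F) + emeasure p (E \<inter> F)"
      using emeasure_Un_Int[of E p F] E F f(2) by simp
    have iE: "emeasure p (E \<inter> F) \<le> emeasure p E" and iF: "emeasure p (E \<inter> F) \<le> emeasure p F"
      using E F EF by (auto intro!: mono)
    have uE: "emeasure p E \<le> emeasure p (E \<union> F)" and uF: "emeasure p F \<le> emeasure p (E \<union> F)"
      using E F EF by (auto intro!: mono)
    have sub: "emeasure p (E \<union> F) \<le> emeasure p E + emeasure p F"
      using emeasure_subadditive[of E p F] E F f(2) by simp
    show "(E \<inter> F \<in> sets X \<and> emeasure p (E \<inter> F) = 1) = ((E \<in> sets X \<and> emeasure p E = 1) \<and> F \<in> sets X \<and> emeasure p F = 1)"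
    proof (cases "emeasure p E = 1 \<and> emeasure p F = 1")
      case True
      have "emeasure p (E \<inter> F) = 1"
      proof (rule ccontr)
        assume "emeasure p (E \<inter> F) \<noteq> 1"
        then have "emeasure p (E \<inter> F) = 0" using f(4)[OF EF(1)] by blast
        then have "emeasure p (E \<union> F) = 2" using u True by simp
        then show False using le1[of "E \<union> F"] by simp
      qed
      then show ?thesis using True E F EF by simp
    next
      case False
      then have "emeasure p E = 0 \<or> emeasure p F = 0" using f(4)[OF E] f(4)[OF F] by blast
      then have "emeasure p (E \<inter> F) = 0" using iE iF by auto
      then show ?thesis using False by simp
    qed
    show "(E \<union> F \<in> sets X \<and> emeasure p (E \<union> F) = 1) = ((E \<in> sets X \<and> emeasure p E = 1) \<or> F \<in> sets X \<and> emeasure p F = 1)"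
    proof (cases "emeasure p E = 1 \<or> emeasure p F = 1")
      case True
      then have "1 \<le> emeasure p (E \<union> F)" using uE uF by auto
      then have "emeasure p (E \<union> F) = 1" using le1[of "E \<union> F"] by (rule antisym[rotated])
      then show ?thesis using True E F EF by auto
    next
      case False
      then have "emeasure p E = 0 \<and> emeasure p F = 0" using f(4)[OF E] f(4)[OF F] by blast
      then have "emeasure p (E \<union> F) = 0" using sub by simp
      then show ?thesis using False by simp
    qed
  next
    fix F :: "nat \<Rightarrow> 'a set" assume F: "range F \<subseteq> sets X"
    have U: "(\<Union>(range F)) \<in> sets X" using F by auto
    have Fn: "F n \<in> sets X" for n using F by auto
    show "(\<Union> (range F) \<in> sets X \<and> emeasure p (\<Union> (range F)) = 1) = (\<exists>n. F n \<in> sets X \<and> emeasure p (F n) = 1)"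
    proof (cases "\<exists>n. emeasure p (F n) = 1")
      case True
      then obtain n where n: "emeasure p (F n) = 1" by auto
      have "emeasure p (F n) \<le> emeasure p (\<Union>(range F))" using Fn U by (intro mono) auto
      then have "emeasure p (\<Union>(range F)) = 1" using n le1[of "\<Union>(range F)"] by simp
      then show ?thesis using U n Fn by auto
    next
      case False
      then have "\<And>n. emeasure p (F n) = 0" using f(4)[OF Fn] by blast
      then have "emeasure p (\<Union>i. F i) = 0" using F f(2) by (intro emeasure_UN_eq_0) auto
      then show ?thesis using False by simp
    qed
  qed
qed

lemma hom_meas:
  assumes \<phi>: "sigma_hom X \<phi>"
  shows "hom_meas X \<phi> \<in> zero_one_measures X"
    "\<And>A. A \<in> sets X \<Longrightarrow> emeasure (hom_meas X \<phi>) A = (if \<phi> A then 1 else 0)"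
    "zo_hom X (hom_meas X \<phi>) = \<phi>"
proof -
  let ?\<mu> = "\<lambda>A. if \<phi> A then 1 else (0::ennreal)"
  have h: "\<phi> (space X)" "\<not> \<phi> {}" "\<And>E F. E \<in> sets X \<Longrightarrow> F \<in> sets X \<Longrightarrow> \<phi> (E \<inter> F) \<longleftrightarrow> \<phi> E \<and> \<phi> F"
    "\<And>F::nat \<Rightarrow> 'a set. range F \<subseteq> sets X \<Longrightarrow> (\<phi> (\<Union>(range F)) \<longleftrightarrow> (\<exists>n. \<phi> (F n)))"
    "\<And>E. E \<notin> sets X \<Longrightarrow> \<not> \<phi> E"
  proof -
    note hh = \<phi>[unfolded sigma_hom_def]
    show "\<phi> (space X)" using hh by (elim conjE)
    show "\<not> \<phi> {}" using hh by (elim conjE)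
    show "\<And>E F. E \<in> sets X \<Longrightarrow> F \<in> sets X \<Longrightarrow> \<phi> (E \<inter> F) \<longleftrightarrow> \<phi> E \<and> \<phi> F"
      using hh by (elim conjE) (drule bspec, assumption, drule bspec, assumption, assumption)
    show "\<And>F::nat \<Rightarrow> 'a set. range F \<subseteq> sets X \<Longrightarrow> (\<phi> (\<Union>(range F)) \<longleftrightarrow> (\<exists>n. \<phi> (F n)))"
      using hh by (elim conjE) (drule spec, drule mp, assumption, assumption)
    show "\<And>E. E \<notin> sets X \<Longrightarrow> \<not> \<phi> E"
      using hh by (elim conjE) (drule spec, drule mp, assumption, assumption)
  qed
  have ca: "countably_additive (sets X) ?\<mu>"
    unfolding countably_additive_def
  proof (intro allI impI)
    fix A :: "nat \<Rightarrow> 'a set" assume A: "range A \<subseteq> sets X" and d: "disjoint_family A"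
    show "(\<Sum>i. ?\<mu> (A i)) = ?\<mu> (\<Union>i. A i)"
    proof (cases "\<exists>n. \<phi> (A n)")
      case True
      then obtain n where n: "\<phi> (A n)" by auto
      have o: "\<And>m. m \<noteq> n \<Longrightarrow> \<not> \<phi> (A m)"
      proof
        fix m assume m: "m \<noteq> n" "\<phi> (A m)"
        then have "\<phi> (A m \<inter> A n)" using h(3)[of "A m" "A n"] A n by auto
        moreover have "A m \<inter> A n = {}" using d m(1) by (auto simp: disjoint_family_on_def)
        ultimately show False using h(2) by simp
      qed
      have "(\<Sum>i. ?\<mu> (A i)) = (\<Sum>i\<in>{n}. ?\<mu> (A i))"
        by (rule suminf_finite) (use o in auto)
      also have "\<dots> = 1" using n by simp
      finally show ?thesis using h(4)[OF A] n by auto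
    next
      case False
      then show ?thesis using h(4)[OF A] by simp
    qed
  qed
  have pos: "positive (sets X) ?\<mu>" unfolding positive_def using h(2) by simp
  have em: "\<And>A. A \<in> sets X \<Longrightarrow> emeasure (hom_meas X \<phi>) A = ?\<mu> A"
    unfolding hom_meas_def by (rule emeasure_measure_of_sigma[OF sets.sigma_algebra_axioms pos ca])
  have ss: "sets (hom_meas X \<phi>) = sets X"
    unfolding hom_meas_def by (rule sigma_algebra.sets_measure_of_eq[OF sets.sigma_algebra_axioms])
  have sp: "space (hom_meas X \<phi>) = space X"
    unfolding hom_meas_def by (rule sigma_algebra.space_measure_of_eq[OF sets.sigma_algebra_axioms])
  have "prob_space (hom_meas X \<phi>)" by (rule prob_spaceI) (simp add: sp em h(1))
  then show "hom_meas X \<phi> \<in> zero_one_measures X"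
    unfolding zero_one_measures_def space_prob_algebra using ss em by auto
  show "\<And>A. A \<in> sets X \<Longrightarrow> emeasure (hom_meas X \<phi>) A = (if \<phi> A then 1 else 0)" by (rule em)
  show "zo_hom X (hom_meas X \<phi>) = \<phi>"
  proof (rule ext)
    fix A show "zo_hom X (hom_meas X \<phi>) A = \<phi> A"
    proof (cases "A \<in> sets X")
      case True then show ?thesis by (simp add: zo_hom_def em)
    next
      case False then show ?thesis using h(5)[OF False] by (simp add: zo_hom_def)
    qed
  qed
qed

lemma zo_eq:
  assumes p: "p \<in> zero_one_measures X" and q: "q \<in> zero_one_measures X" and e: "zo_hom X p = zo_hom X q"
  shows "p = q"
proof (rule measure_eqI)
  show "sets p = sets q" using zo_facts(2)[OF p] zo_facts(2)[OF q] by simp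
  fix A assume "A \<in> sets p"
  then have A: "A \<in> sets X" using zo_facts(2)[OF p] by simp
  have "emeasure p A = 1 \<longleftrightarrow> emeasure q A = 1" using fun_cong[OF e, of A] A by (simp add: zo_hom_def)
  then show "emeasure p A = emeasure q A" using zo_facts(4)[OF p A] zo_facts(4)[OF q A] by auto
qed

lemma stone_unit_zo: "x \<in> space X \<Longrightarrow> stone_unit X x = zo_hom X (return X x)"
  unfolding stone_unit_def zo_hom_def by (auto intro!: ext simp: indicator_def)

lemma stone_unit_meas: "stone_unit X \<in> X \<rightarrow>\<^sub>M Stone_sigma X"
  unfolding Stone_sigma_def
proof (rule measurable_measure_of)
  show "stone_unit X \<in> space X \<rightarrow> {\<phi>. sigma_hom X \<phi>}" using stone_unit_hom by auto
  fix y assume "y \<in> (\<lambda>a. {\<phi>. sigma_hom X \<phi> \<and> \<phi> a}) ` sets X"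
  then obtain a where a: "a \<in> sets X" "y = {\<phi>. sigma_hom X \<phi> \<and> \<phi> a}" by auto
  have "stone_unit X -` y \<inter> space X = a"
  proof (intro equalityI subsetI)
    fix x assume "x \<in> stone_unit X -` y \<inter> space X"
    then show "x \<in> a" using a by (simp add: stone_unit_def)
  next
    fix x assume x: "x \<in> a"
    then have xs: "x \<in> space X" using sets.sets_into_space[OF a(1)] by auto
    have "sigma_hom X (stone_unit X x)" by (rule stone_unit_hom[OF xs])
    moreover have "stone_unit X x a" using a(1) x by (simp add: stone_unit_def)
    ultimately show "x \<in> stone_unit X -` y \<inter> space X" using a(2) xs by simp
  qed
  then show "stone_unit X -` y \<inter> space X \<in> sets X" using a by simp
qed auto

lemma partB: "bij_betw (return X) (space X) (zero_one_measures X) \<longleftrightarrow> measurable_iso X (Stone_sigma X) (stone_unit X)"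
proof
  assume bij: "bij_betw (return X) (space X) (zero_one_measures X)"
  define g where "g \<phi> = the_inv_into (space X) (return X) (hom_meas X \<phi>)" for \<phi>
  have gX: "g \<phi> \<in> space X" if h: "sigma_hom X \<phi>" for \<phi>
    unfolding g_def using the_inv_into_into[of "return X" "space X" "hom_meas X \<phi>" "space X"] hom_meas(1)[OF h] bij
    by (simp add: bij_betw_def)
  have gr: "return X (g \<phi>) = hom_meas X \<phi>" if h: "sigma_hom X \<phi>" for \<phi>
    unfolding g_def using bij hom_meas(1)[OF h] unfolding bij_betw_def by (intro f_the_inv_into_f) auto
  have sg: "stone_unit X (g \<phi>) = \<phi>" if h: "sigma_hom X \<phi>" for \<phi>
    by (simp add: stone_unit_zo[OF gX[OF h]] gr[OF h] hom_meas(3)[OF h])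
  have gs: "\<And>x. x \<in> space X \<Longrightarrow> g (stone_unit X x) = x"
  proof -
    fix x assume x: "x \<in> space X"
    have h: "sigma_hom X (stone_unit X x)" by (rule stone_unit_hom[OF x])
    have "return X (g (stone_unit X x)) = return X x"
    proof (rule zo_eq)
      show "return X (g (stone_unit X x)) \<in> zero_one_measures X" using gr[OF h] hom_meas(1)[OF h] by simp
      show "return X x \<in> zero_one_measures X" by (rule ret_zo[OF x])
      show "zo_hom X (return X (g (stone_unit X x))) = zo_hom X (return X x)"
        using gr[OF h] hom_meas(3)[OF h] stone_unit_zo[OF x] by simp
    qed
    then show "g (stone_unit X x) = x"
      using bij gX[OF h] x by (auto simp: bij_betw_def dest: inj_onD)
  qed
  have gm: "g \<in> Stone_sigma X \<rightarrow>\<^sub>M X"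
  proof (rule measurableI)
    show "\<And>\<phi>. \<phi> \<in> space (Stone_sigma X) \<Longrightarrow> g \<phi> \<in> space X" using gX by (simp add: stone_space)
    fix A assume A: "A \<in> sets X"
    have "g -` A \<inter> space (Stone_sigma X) = {\<phi>. sigma_hom X \<phi> \<and> \<phi> A}"
    proof -
      have "\<And>\<phi>. sigma_hom X \<phi> \<Longrightarrow> \<phi> A \<longleftrightarrow> g \<phi> \<in> A"
        using sg A by (metis stone_unit_def)
      then show ?thesis by (auto simp: stone_space)
    qed
    also have "\<dots> \<in> sets (Stone_sigma X)"
      unfolding stone_sets using A by (intro sigma_sets.Basic) auto
    finally show "g -` A \<inter> space (Stone_sigma X) \<in> sets (Stone_sigma X)" .
  qed
  show "measurable_iso X (Stone_sigma X) (stone_unit X)"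
    unfolding measurable_iso_def
    using stone_unit_meas gm gs sg by (auto simp: stone_space)
next
  assume "measurable_iso X (Stone_sigma X) (stone_unit X)"
  then obtain g where gm: "g \<in> Stone_sigma X \<rightarrow>\<^sub>M X" and gs: "\<forall>x\<in>space X. g (stone_unit X x) = x"
    and sg: "\<forall>y\<in>space (Stone_sigma X). stone_unit X (g y) = y"
    unfolding measurable_iso_def by blast
  have inj: "inj_on (return X) (space X)"
  proof (rule inj_onI)
    fix x y assume x: "x \<in> space X" and y: "y \<in> space X" and e: "return X x = return X y"
    then have "stone_unit X x = stone_unit X y" using stone_unit_zo by metis
    then show "x = y" using gs x y by metis
  qed
  have surj: "zero_one_measures X \<subseteq> return X ` space X"
  proof
    fix p assume p: "p \<in> zero_one_measures X"
    have h: "zo_hom X p \<in> space (Stone_sigma X)" using zo_hom_hom[OF p] by (simp add: stone_space)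
    define x where "x = g (zo_hom X p)"
    have x: "x \<in> space X" unfolding x_def using measurable_space[OF gm h] .
    have "zo_hom X (return X x) = zo_hom X p" using stone_unit_zo[OF x] sg h by (simp add: x_def)
    then have "return X x = p" using zo_eq ret_zo[OF x] p by blast
    then show "p \<in> return X ` space X" using x by blast
  qed
  show "bij_betw (return X) (space X) (zero_one_measures X)"
  proof -
    have "return X ` space X \<subseteq> zero_one_measures X" by (rule image_subsetI, rule ret_zo)
    then show ?thesis unfolding bij_betw_def using inj surj by simp
  qed
qed

theorem lemma2p14:
  fixes X :: "'a measure"
  shows "(sober TYPE('z) X \<longleftrightarrow> bij_betw (return X) (space X) (zero_one_measures X))
       \<and> (bij_betw (return X) (space X) (zero_one_measures X)
            \<longleftrightarrow> measurable_iso X (Stone_sigma X) (stone_unit X))"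
  using partA partB by blast

end
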